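(* Let $\mathcal{H}$ be a Hilbert space of dimension $d$. Consider the two-sample quantum universal hypothesis testing problem: for unknown $\rho,\sigma\in\mathcal{D}(\mathcal{H})$ one is given $\sigma^{\otimes m}\otimes\rho^{\otimes n}$ and must test $H_0:\sigma=\rho$ against $H_1:\sigma\neq\rho$. Let $\alpha\in(0,1)$, $k=\min\{m,n\}$, and let $m,n\to\infty$ at the same rate (i.e. along pairs with $m/n$ and $n/m$ bounded). Then there exist decision rules $M$ (depending only on $m,n,\alpha,d$), using only independent measurements, such that for all sufficiently large $m,n$: whenever $\sigma=\rho$ (for any $\rho\in\mathcal{D}(\mathcal{H})$) the probability of declaring $H_1$ is at most $\alpha$; and for every fixed pair $\rho\neq\sigma$ there is a constant $K$ such that, for all sufficiently large $m,n$, the probability $\beta$ of declaring $H_0$ satisfies $$\beta\le\exp\!\left(-\frac{k\|\rho-\sigma\|_1^2}{344\,d^3}+K k^{1/2}\right).$$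
   Context: $\mathcal{D}(\mathcal{H})$ denotes the set of density operators on $\mathcal{H}$. A decision rule is a two-outcome POVM $\{E_0,E_1\}$ on $\mathcal{H}^{\otimes(m+n)}$ (outcome $0$: declare $H_0$; outcome $1$: declare $H_1$), not depending on the unknown states. "Independent measurements" means each of the $m+n$ copies is measured separately and the outcomes are classically processed. The probability of declaring $H_0$ is $\mathrm{Tr}[(\sigma^{\otimes m}\otimes\rho^{\otimes n})E_0]$. $\|X\|_1=\mathrm{Tr}\sqrt{X^\dagger X}$ is the trace norm. *)

theory Defs
  imports "Jordan_Normal_Form.Schur_Decomposition" "Jordan_Normal_Form.Char_Poly"
    "HOL-Library.FuncSet"
begin

(* Matrices over C^d represent operators on the d-dimensional Hilbert space H. *)

definition hermitian_mat :: "nat \<Rightarrow> complex mat \<Rightarrow> bool" where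
  "hermitian_mat d A \<longleftrightarrow> A \<in> carrier_mat d d \<and> mat_adjoint A = A"

definition psd_mat :: "nat \<Rightarrow> complex mat \<Rightarrow> bool" where
  "psd_mat d A \<longleftrightarrow> hermitian_mat d A \<and>
     (\<forall>v \<in> carrier_vec d. 0 \<le> Re ((A *\<^sub>v v) \<bullet>c v))"

definition trace :: "complex mat \<Rightarrow> complex" where
  "trace A = (\<Sum>i<dim_row A. A $$ (i, i))"

definition density_op :: "nat \<Rightarrow> complex mat \<Rightarrow> bool" where
  "density_op d A \<longleftrightarrow> psd_mat d A \<and> trace A = 1"

definition povm :: "nat \<Rightarrow> complex mat list \<Rightarrow> bool" where
  "povm d F \<longleftrightarrow> F \<noteq> [] \<and> (\<forall>E \<in> set F. psd_mat d E) \<and>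
     foldr (+) F (0\<^sub>m d d) = 1\<^sub>m d"

(* Trace norm ||X||_1 = Tr sqrt(X^dagger X) = sum of the square roots of the
   eigenvalues (with multiplicity) of X^dagger X. *)
definition trace_norm :: "complex mat \<Rightarrow> real" where
  "trace_norm X = sum_mset (image_mset (\<lambda>e. sqrt (cmod e))
                    (proots (char_poly (mat_adjoint X * X))))"

(* A decision rule using only independent measurements on N = m+n copies:
   copy i is measured with the POVM P i (outcome x i < length (P i)); the
   outcome string x is classically (possibly randomly) processed: g x is the
   probability of declaring H0.  Corresponding POVM element:
   E0 = sum_x g x * (P 0 ! x 0 (x) ... (x) P (N-1) ! x (N-1)). *)
type_synonym indep_rule = "(nat \<Rightarrow> complex mat list) \<times> ((nat \<Rightarrow> nat) \<Rightarrow> real)"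

definition outcomes :: "nat \<Rightarrow> (nat \<Rightarrow> complex mat list) \<Rightarrow> (nat \<Rightarrow> nat) set" where
  "outcomes N P = Pi\<^sub>E {..<N} (\<lambda>i. {..<length (P i)})"

definition valid_indep_rule :: "nat \<Rightarrow> nat \<Rightarrow> indep_rule \<Rightarrow> bool" where
  "valid_indep_rule d N M \<longleftrightarrow>
     (\<forall>i<N. povm d (fst M i)) \<and> (\<forall>x \<in> outcomes N (fst M). 0 \<le> snd M x \<and> snd M x \<le> 1)"

definition copy_state :: "nat \<Rightarrow> complex mat \<Rightarrow> complex mat \<Rightarrow> nat \<Rightarrow> complex mat" where
  "copy_state m \<sigma> \<rho> i = (if i < m then \<sigma> else \<rho>)"

(* probability of outcome string x: Tr[(sigma^m (x) rho^n)(P 0!x 0 (x) ...)] *)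
definition outcome_prob :: "nat \<Rightarrow> nat \<Rightarrow> indep_rule \<Rightarrow> complex mat \<Rightarrow> complex mat \<Rightarrow> (nat \<Rightarrow> nat) \<Rightarrow> real" where
  "outcome_prob m n M \<sigma> \<rho> x =
     (\<Prod>i<m+n. Re (trace (copy_state m \<sigma> \<rho> i * (fst M i ! x i))))"

definition prob_H0 :: "nat \<Rightarrow> nat \<Rightarrow> indep_rule \<Rightarrow> complex mat \<Rightarrow> complex mat \<Rightarrow> real" where
  "prob_H0 m n M \<sigma> \<rho> =
     (\<Sum>x \<in> outcomes (m+n) (fst M). snd M x * outcome_prob m n M \<sigma> \<rho> x)"

definition prob_H1 :: "nat \<Rightarrow> nat \<Rightarrow> indep_rule \<Rightarrow> complex mat \<Rightarrow> complex mat \<Rightarrow> real" where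
  "prob_H1 m n M \<sigma> \<rho> =
     (\<Sum>x \<in> outcomes (m+n) (fst M). (1 - snd M x) * outcome_prob m n M \<sigma> \<rho> x)"

end

theory Submission
  imports Defs "HOL-Probability.Hoeffding" "HOL-Probability.Product_PMF"
begin

no_notation vec_nth (infixl "$" 90)

lemma mult_mat_vec_sum: "M \<in> carrier_mat d d \<Longrightarrow> v \<in> carrier_vec d \<Longrightarrow> a < d \<Longrightarrow>
  (M *\<^sub>v v) $ a = (\<Sum>b<d. M $$ (a,b) * v $ b)"
  by (simp add: scalar_prod_def atLeast0LessThan)

lemma trace_mult_sum:
  assumes "A \<in> carrier_mat d k" "B \<in> carrier_mat k d"
  shows "Defs.trace (A * B) = (\<Sum>a<d. \<Sum>b<k. A $$ (a,b) * B $$ (b,a))"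
proof -
  have *: "(A * B) $$ (a,a) = (\<Sum>b<k. A $$ (a,b) * B $$ (b,a))" if "a < d" for a
    using assms that by (auto simp: scalar_prod_def atLeast0LessThan index_mult_mat)
  have "dim_row (A * B) = d" using assms by simp
  then have "Defs.trace (A * B) = (\<Sum>a<d. (A * B) $$ (a,a))" using assms by (simp add: Defs.trace_def atLeast0LessThan carrier_matD del: index_mult_mat)
  also have "\<dots> = (\<Sum>a<d. \<Sum>b<k. A $$ (a,b) * B $$ (b,a))"
    by (rule sum.cong) (use * in auto)
  finally show ?thesis .
qed

lemma trace_comm:
  assumes "A \<in> carrier_mat d k" "B \<in> carrier_mat k d"
  shows "Defs.trace (A * B) = Defs.trace (B * A)"
proof -
  have "Defs.trace (A * B) = (\<Sum>a<d. \<Sum>b<k. A $$ (a,b) * B $$ (b,a))" by (rule trace_mult_sum[OF assms])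
  also have "\<dots> = (\<Sum>b<k. \<Sum>a<d. B $$ (b,a) * A $$ (a,b))"
    by (subst sum.swap) (simp add: mult.commute)
  also have "\<dots> = Defs.trace (B * A)" by (rule trace_mult_sum[OF assms(2,1), symmetric])
  finally show ?thesis .
qed

lemma mat_adjoint_carrier: "X \<in> carrier_mat d d \<Longrightarrow> mat_adjoint X \<in> carrier_mat d d"
  unfolding mat_adjoint_def by (auto simp: mat_of_rows_def)

lemma mat_adjoint_index: "X \<in> carrier_mat d d \<Longrightarrow> i < d \<Longrightarrow> j < d \<Longrightarrow>
   mat_adjoint X $$ (i,j) = cnj (X $$ (j,i))"
  unfolding mat_adjoint_def by (auto simp: mat_of_rows_def)

lemma adj_quad:
  assumes X: "X \<in> carrier_mat d d" and v: "v \<in> carrier_vec d"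
  shows "((mat_adjoint X * X) *\<^sub>v v) \<bullet>c v = (\<Sum>k<d. complex_of_real ((cmod (\<Sum>b<d. X$$(k,b) * v$b))^2))"
proof -
  have "((mat_adjoint X * X) *\<^sub>v v) \<bullet>c v = (\<Sum>a<d. (\<Sum>b<d. (\<Sum>k<d. cnj (X$$(k,a)) * X$$(k,b)) * v$b) * cnj (v$a))"
  proof -
    have M: "(mat_adjoint X * X) $$ (a,b) = (\<Sum>k<d. cnj (X$$(k,a)) * X$$(k,b))" if "a<d" "b<d" for a b
      using X that mat_adjoint_carrier[OF X]
      by (auto simp: scalar_prod_def atLeast0LessThan mat_adjoint_index intro!: sum.cong)
    have Mv: "((mat_adjoint X * X) *\<^sub>v v) $ a = (\<Sum>b<d. (\<Sum>k<d. cnj (X$$(k,a)) * X$$(k,b)) * v$b)" if "a<d" for a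
      using X v that mat_adjoint_carrier[OF X]
      by (subst mult_mat_vec_sum[of _ d]) (auto simp: M simp del: index_mult_mat intro!: sum.cong)
    show ?thesis using X v mat_adjoint_carrier[OF X]
      by (auto simp: scalar_prod_def atLeast0LessThan Mv simp del: index_mult_mat assoc_mult_mat_vec intro!: sum.cong)
  qed
  also have "\<dots> = (\<Sum>k<d. (\<Sum>b<d. X$$(k,b) * v$b) * cnj (\<Sum>a<d. X$$(k,a) * v$a))"
  proof -
    define T where "T = (\<lambda>k a b. cnj (X$$(k,a)) * X$$(k,b) * v$b * cnj (v$a))"
    have "(\<Sum>a<d. (\<Sum>b<d. (\<Sum>k<d. cnj (X$$(k,a)) * X$$(k,b)) * v$b) * cnj (v$a))
        = (\<Sum>a<d. \<Sum>b<d. \<Sum>k<d. T k a b)" by (simp add: sum_distrib_right T_def)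
    also have "\<dots> = (\<Sum>a<d. \<Sum>k<d. \<Sum>b<d. T k a b)"
      by (rule sum.cong[OF refl], rule sum.swap)
    also have "\<dots> = (\<Sum>k<d. \<Sum>a<d. \<Sum>b<d. T k a b)"
      by (rule sum.swap)
    also have "\<dots> = (\<Sum>k<d. (\<Sum>b<d. X$$(k,b) * v$b) * cnj (\<Sum>a<d. X$$(k,a) * v$a))"
    proof (rule sum.cong[OF refl])
      fix k
      have "(\<Sum>b<d. X$$(k,b) * v$b) * cnj (\<Sum>a<d. X$$(k,a) * v$a)
          = (\<Sum>b<d. X$$(k,b) * v$b) * (\<Sum>a<d. cnj (X$$(k,a)) * cnj (v$a))"
        by (simp add: cnj_sum)
      also have "\<dots> = (\<Sum>b<d. \<Sum>a<d. (X$$(k,b) * v$b) * (cnj (X$$(k,a)) * cnj (v$a)))"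
        by (simp add: sum_product)
      also have "\<dots> = (\<Sum>a<d. \<Sum>b<d. T k a b)"
        by (subst sum.swap) (simp add: T_def mult_ac)
      finally show "(\<Sum>a<d. \<Sum>b<d. T k a b) = (\<Sum>b<d. X$$(k,b) * v$b) * cnj (\<Sum>a<d. X$$(k,a) * v$a)" by simp
    qed
    finally show ?thesis .
  qed
  also have "\<dots> = (\<Sum>k<d. complex_of_real ((cmod (\<Sum>b<d. X$$(k,b) * v$b))^2))"
    by (simp only: complex_norm_square)
  finally show ?thesis .
qed

lemma self_cscalar:
  assumes v: "v \<in> carrier_vec d"
  shows "v \<bullet>c v = complex_of_real (\<Sum>i<d. (cmod (v$i))^2)"
proof -
  have "v \<bullet>c v = (\<Sum>i<d. v$i * cnj (v$i))" using v by (simp add: scalar_prod_def atLeast0LessThan)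
  also have "\<dots> = complex_of_real (\<Sum>i<d. (cmod (v$i))^2)" by (simp only: of_real_sum complex_norm_square)
  finally show ?thesis .
qed

lemma eig_nonneg:
  assumes X: "X \<in> carrier_mat d d" and e: "poly (char_poly (mat_adjoint X * X)) e = 0"
  shows "\<exists>r\<ge>0. e = complex_of_real r"
proof -
  let ?A = "mat_adjoint X * X"
  have A: "?A \<in> carrier_mat d d" using X mat_adjoint_carrier[OF X] by auto
  have "eigenvalue ?A e" using eigenvalue_root_char_poly[OF A] e by simp
  then obtain v where ev: "eigenvector ?A v e" unfolding eigenvalue_def by blast
  then have v: "v \<in> carrier_vec d" and v0: "v \<noteq> 0\<^sub>v d" and Av: "?A *\<^sub>v v = e \<cdot>\<^sub>v v"
    using A unfolding eigenvector_def by auto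
  define q where "q = (\<Sum>i<d. (cmod (v$i))^2)"
  define s where "s = (\<Sum>k<d. (cmod (\<Sum>b<d. X$$(k,b) * v$b))^2)"
  have s0: "s \<ge> 0" unfolding s_def by (intro sum_nonneg) auto
  obtain i where i: "i < d" "v $ i \<noteq> 0" using v v0 by (metis eq_vecI carrier_vecD index_zero_vec)
  have "(cmod (v$i))^2 \<le> q" unfolding q_def
    by (rule member_le_sum[of i "{..<d}" "\<lambda>i. (cmod (v$i))^2"]) (use i in auto)
  moreover have "(cmod (v$i))^2 > 0" using i by auto
  ultimately have q0: "q > 0" by linarith
  have "complex_of_real s = (?A *\<^sub>v v) \<bullet>c v" unfolding s_def using adj_quad[OF X v] by simp
  also have "\<dots> = e * (v \<bullet>c v)" unfolding Av using v by simp
  also have "\<dots> = e * complex_of_real q" unfolding q_def using self_cscalar[OF v] by simp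
  finally have "e = complex_of_real (s / q)" using q0 by (simp add: field_simps)
  then show ?thesis using s0 q0 by (intro exI[of _ "s/q"]) auto
qed

lemma cnj_mult_self: "cnj z * z = complex_of_real ((cmod z)^2)"
  by (simp only: complex_norm_square mult.commute[of "cnj z" z])

lemma sum_list_singletons: "(\<Sum>a\<leftarrow>es. {#a#}) = mset es"
  by (induction es) auto

lemma trace_norm_bound:
  assumes X: "X \<in> carrier_mat d d"
  shows "trace_norm X \<le> sqrt (real d * (\<Sum>a<d. \<Sum>b<d. (cmod (X$$(a,b)))^2))"
proof -
  let ?A = "mat_adjoint X * X"
  have A: "?A \<in> carrier_mat d d" using X mat_adjoint_carrier[OF X] by auto
  obtain es where cp: "char_poly ?A = (\<Prod>a\<leftarrow>es. [:- a, 1:])" and len: "length es = d"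
    using char_poly_factorized[OF A] by blast
  have pr: "proots (char_poly ?A) = mset es"
  proof -
    have "proots (char_poly ?A) = proots (\<Prod>p\<leftarrow>map (\<lambda>a. [:- a, 1:]) es. p)"
      unfolding cp by (simp add: o_def)
    also have "\<dots> = (\<Sum>p\<leftarrow>map (\<lambda>a. [:- a, 1:]) es. proots p)"
      by (rule proots_prod_list) auto
    also have "\<dots> = (\<Sum>a\<leftarrow>es. {#a#})"
      by (simp add: o_def)
    finally show ?thesis by (simp add: sum_list_singletons)
  qed
  have cp0: "char_poly ?A \<noteq> 0" using degree_monic_char_poly[OF A] by auto
  have re: "cmod e = Re e \<and> Re e \<ge> 0" if "e \<in> set es" for e
  proof -
    have "e \<in># proots (char_poly ?A)" using that pr by simp
    then have "poly (char_poly ?A) e = 0" using cp0 by simp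
    then obtain r where "r \<ge> 0" "e = complex_of_real r" using eig_nonneg[OF X] by blast
    then show ?thesis by simp
  qed
  have tn: "trace_norm X = (\<Sum>i<d. sqrt (Re (es ! i)))"
  proof -
    have "trace_norm X = (\<Sum>e\<leftarrow>es. sqrt (cmod e))"
      unfolding trace_norm_def pr by (metis mset_map sum_mset_sum_list)
    also have "\<dots> = (\<Sum>e\<leftarrow>es. sqrt (Re e))"
      by (rule arg_cong[where f=sum_list], rule map_cong, simp, use re in auto)
    also have "\<dots> = (\<Sum>i<d. sqrt (Re (es ! i)))"
      by (simp add: sum_list_sum_nth len atLeast0LessThan)
    finally show ?thesis .
  qed
  obtain B P Q where sd: "schur_decomposition ?A es = (B,P,Q)" by (cases "schur_decomposition ?A es") auto
  from schur_decomposition[OF A cp sd] have sim: "similar_mat_wit ?A B P Q" and dg: "diag_mat B = es" by auto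
  have dA: "dim_row ?A = d" using A by auto
  from sim have BPQ: "B \<in> carrier_mat d d" "P \<in> carrier_mat d d" "Q \<in> carrier_mat d d"
     and QP: "Q * P = 1\<^sub>m d" and APBQ: "?A = P * B * Q"
    unfolding similar_mat_wit_def Let_def dA by auto
  have trAB: "Defs.trace ?A = Defs.trace B"
  proof -
    have "Defs.trace ?A = Defs.trace ((P * B) * Q)" using APBQ by simp
    also have "\<dots> = Defs.trace (Q * (P * B))" by (rule trace_comm[of _ d d]) (use BPQ in auto)
    also have "Q * (P * B) = (Q * P) * B" using BPQ by (simp add: assoc_mult_mat)
    also have "\<dots> = B" using QP BPQ by simp
    finally show ?thesis .
  qed
  have trB: "Defs.trace B = (\<Sum>i<d. es ! i)"
    using dg BPQ unfolding diag_mat_def Defs.trace_def by (auto simp: atLeast0LessThan)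
  have trA: "Defs.trace ?A = complex_of_real (\<Sum>a<d. \<Sum>b<d. (cmod (X$$(a,b)))^2)"
  proof -
    have "Defs.trace ?A = (\<Sum>a<d. \<Sum>k<d. mat_adjoint X $$ (a,k) * X $$ (k,a))"
      by (rule trace_mult_sum) (use X mat_adjoint_carrier[OF X] in auto)
    also have "\<dots> = (\<Sum>a<d. \<Sum>k<d. complex_of_real ((cmod (X$$(k,a)))^2))"
      by (intro sum.cong refl) (simp only: mat_adjoint_index[OF X] lessThan_iff cnj_mult_self)
    also have "\<dots> = (\<Sum>k<d. \<Sum>a<d. complex_of_real ((cmod (X$$(k,a)))^2))"
      by (rule sum.swap)
    also have "\<dots> = complex_of_real (\<Sum>a<d. \<Sum>b<d. (cmod (X$$(a,b)))^2)"
      by (simp only: of_real_sum)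
    finally show ?thesis .
  qed
  have sumRe: "(\<Sum>i<d. Re (es ! i)) = (\<Sum>a<d. \<Sum>b<d. (cmod (X$$(a,b)))^2)"
  proof -
    have "(\<Sum>i<d. Re (es ! i)) = Re (\<Sum>i<d. es ! i)" by simp
    also have "\<dots> = Re (Defs.trace ?A)" using trAB trB by simp
    finally show ?thesis using trA by simp
  qed
  have nn: "Re (es ! i) \<ge> 0" if "i < d" for i using re[of "es ! i"] that len by auto
  have "(\<Sum>i<d. 1 * sqrt (Re (es ! i)))^2 \<le> (\<Sum>i<d. 1^2) * (\<Sum>i<d. (sqrt (Re (es ! i)))^2)"
    by (rule Cauchy_Schwarz_ineq_sum)
  also have "(\<Sum>i<d. (sqrt (Re (es ! i)))^2) = (\<Sum>i<d. Re (es ! i))"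
    by (intro sum.cong refl) (use nn in auto)
  finally have "(trace_norm X)^2 \<le> real d * (\<Sum>a<d. \<Sum>b<d. (cmod (X$$(a,b)))^2)"
    unfolding tn sumRe by simp
  then show ?thesis by (rule real_le_rsqrt)
qed

definition ph :: "nat \<Rightarrow> complex" where
  "ph c = (if c = 0 then 1 else if c = 1 then -1 else if c = 2 then \<i> else -\<i>)"

definition wv :: "nat \<Rightarrow> nat \<Rightarrow> nat \<Rightarrow> complex" where
  "wv d t a = (if a = t div 4 div d then 1 else 0) + (if a = t div 4 mod d then ph (t mod 4) else 0)"

definition Fm :: "nat \<Rightarrow> nat \<Rightarrow> complex mat" where
  "Fm d t = Matrix.mat d d (\<lambda>(a,b). wv d t a * cnj (wv d t b) / of_nat (8*d))"

lemma Fm_carrier[simp]: "Fm d t \<in> carrier_mat d d" unfolding Fm_def by simp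

lemma Fm_index: "a < d \<Longrightarrow> b < d \<Longrightarrow> Fm d t $$ (a,b) = wv d t a * cnj (wv d t b) / of_nat (8*d)"
  unfolding Fm_def by simp

definition enc :: "nat \<Rightarrow> nat \<Rightarrow> nat \<Rightarrow> nat \<Rightarrow> nat" where
  "enc d i j c = c + (j + i*d)*4"

lemma sum_J: "(\<Sum>t<(d::nat)*d*4. h t) = (\<Sum>i<d. \<Sum>j<d. \<Sum>c<4. h (enc d i j c))"
  by (simp add: sum_mult_product enc_def)

lemma wv_dec: fixes c j d :: nat assumes "c < 4" "j < d"
  shows "wv d (enc d i j c) x = (if x = i then 1 else 0) + (if x = j then ph c else 0)"
proof -
  have "(c + (j + i*d)*4) div 4 = j + i*d" "(c + (j + i*d)*4) mod 4 = c" using assms by (simp, simp only: mod_mult_self1 mod_less)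
  moreover have "(j + i*d) div d = i" "(j + i*d) mod d = j" using assms by auto
  ultimately show ?thesis unfolding wv_def enc_def by simp
qed

lemma sum4: fixes f :: "nat \<Rightarrow> 'a :: comm_monoid_add" shows "(\<Sum>c<4. f c) = f 0 + f 1 + f 2 + f 3"
  by (simp add: eval_nat_numeral ac_simps)

lemma ph_sum: "(\<Sum>c<4. (x + y * ph c) * (u + w * cnj (ph c))) = 4 * (x * u + y * w)"
  unfolding sum4 ph_def by (simp add: algebra_simps)

lemma l1: "(if a=i then 1 else 0)*(if b=i then 1 else 0) = (if i=a \<and> a=b then 1 else (0::complex))" by auto
lemma l2: "4 * x / of_nat (8*d) = x / (2 * of_nat d :: complex)" by simp
lemma l3: "a < d \<Longrightarrow> (\<Sum>i<d. \<Sum>j<(d::nat). ((if i = a then 1 else 0) + (if j = a then 1 else (0::complex)))) = 2 * of_nat d"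
  by (simp add: sum.distrib flip: sum_distrib_left)

lemma Fm_sum: assumes "a < d" "b < d"
  shows "(\<Sum>t<d*d*4. Fm d t $$ (a,b)) = (if a = b then 1 else 0)"
proof -
  have "(\<Sum>t<d*d*4. Fm d t $$ (a,b)) = (\<Sum>i<d. \<Sum>j<d. \<Sum>c<4.
      ((if a = i then 1 else 0) + (if a = j then 1 else 0) * ph c) *
      ((if b = i then 1 else 0) + (if b = j then 1 else 0) * cnj (ph c)) / of_nat (8*d))"
    unfolding sum_J using assms
    by (intro sum.cong refl) (simp only: Fm_index wv_dec lessThan_iff, simp)
  also have "\<dots> = (\<Sum>i<d. \<Sum>j<d. 4 * ((if a = i then 1 else 0) * (if b = i then 1 else 0)
        + (if a = j then 1 else 0) * (if b = j then 1 else 0)) / of_nat (8*d))"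
    by (intro sum.cong refl) (simp only: ph_sum flip: sum_divide_distrib)
  also have "\<dots> = (\<Sum>i<d. \<Sum>j<d. ((if i = a \<and> a = b then 1 else 0) + (if j = a \<and> a = b then 1 else 0)) / (2 * of_nat d))"
    by (intro sum.cong refl) (simp only: l1 l2)
  also have "\<dots> = (if a = b then 1 else 0)"
  proof (cases "a = b")
    case True
    have "(\<Sum>i<d. \<Sum>j<d. ((if i = a \<and> a = b then 1 else 0) + (if j = a \<and> a = b then 1 else 0)) / (2 * of_nat d))
      = (\<Sum>i<d. \<Sum>j<d. ((if i = a then 1 else 0) + (if j = a then 1 else 0))) / (2 * (of_nat d :: complex))"
      unfolding True by (simp only: simp_thms sum_divide_distrib)
    also have "(\<Sum>i<d. \<Sum>j<d. ((if i = a then 1 else 0) + (if j = a then 1 else (0::complex)))) = 2 * of_nat d"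
      using assms(1) by (rule l3)
    finally show ?thesis using True assms by simp
  qed simp
  finally show ?thesis .
qed

lemma Fm_dim[simp]: "dim_row (Fm d t) = d" "dim_col (Fm d t) = d"
  unfolding Fm_def by simp_all

lemma Fm_r: "Fm d t $$ (a,b) = wv d t a * cnj (wv d t b) * inverse (of_nat (8*d))" if "a < d" "b < d"
  using that by (simp only: Fm_index divide_inverse)

lemma Fm_herm: "mat_adjoint (Fm d t) = Fm d t"
proof -
  have C: "mat_adjoint (Fm d t) \<in> carrier_mat d d" by (rule mat_adjoint_carrier[OF Fm_carrier])
  show ?thesis
    by (rule eq_matI) (use C in \<open>auto simp: mat_adjoint_index[OF Fm_carrier] Fm_index\<close>)
qed

lemma Fm_quad:
  assumes v: "v \<in> carrier_vec d"
  shows "(Fm d t *\<^sub>v v) \<bullet>c v = complex_of_real ((cmod (\<Sum>a<d. wv d t a * cnj (v$a)))^2 / (8 * d))"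
proof -
  let ?z = "\<Sum>a<d. wv d t a * cnj (v$a)"
  define r where "r = inverse (of_nat (8*d) :: complex)"
  have "(Fm d t *\<^sub>v v) \<bullet>c v = (\<Sum>a<d. (\<Sum>b<d. Fm d t $$ (a,b) * v$b) * cnj (v$a))"
    using v by (auto simp: scalar_prod_def atLeast0LessThan mult_mat_vec_sum[of _ d] intro!: sum.cong)
  also have "\<dots> = (\<Sum>a<d. \<Sum>b<d. (wv d t a * cnj (v$a)) * (cnj (wv d t b) * v$b)) * r"
  proof -
    have "Fm d t $$ (a,b) * v$b * cnj (v$a) = (wv d t a * cnj (v$a)) * (cnj (wv d t b) * v$b) * r"
      if "a < d" "b < d" for a b
      using that unfolding r_def by (simp only: Fm_r mult_ac)
    then show ?thesis
      by (simp only: sum_distrib_right) (rule sum.cong[OF refl], rule sum.cong[OF refl], simp)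
  qed
  also have "\<dots> = ?z * cnj ?z * r"
  proof -
    have zz: "?z * cnj ?z = (\<Sum>a<d. \<Sum>b<d. (wv d t a * cnj (v$a)) * (cnj (wv d t b) * v$b))"
      by (simp only: cnj_sum complex_cnj_mult complex_cnj_cnj sum_product)
    show ?thesis by (simp only: zz)
  qed
  also have "\<dots> = ?z * cnj ?z / of_nat (8*d)"
    unfolding r_def by (simp only: divide_inverse)
  also have "\<dots> = complex_of_real ((cmod ?z)^2 / (8 * d))"
    by (simp only: complex_norm_square[symmetric]) simp
  finally show ?thesis .
qed

lemma Fm_psd: "psd_mat d (Fm d t)"
  unfolding psd_mat_def hermitian_mat_def using Fm_herm Fm_quad by simp

definition wvec :: "nat \<Rightarrow> nat \<Rightarrow> complex Matrix.vec" where
  "wvec d t = Matrix.vec d (wv d t)"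

lemma trace_Fm:
  assumes S: "S \<in> carrier_mat d d"
  shows "Defs.trace (S * Fm d t) = ((S *\<^sub>v wvec d t) \<bullet>c wvec d t) / of_nat (8*d)"
proof -
  have "Defs.trace (S * Fm d t) = (\<Sum>a<d. \<Sum>b<d. S $$ (a,b) * Fm d t $$ (b,a))"
    by (rule trace_mult_sum[OF S Fm_carrier])
  also have "\<dots> = (\<Sum>a<d. (\<Sum>b<d. S $$ (a,b) * wv d t b) * cnj (wv d t a)) / of_nat (8*d)"
  proof -
    define r where "r = inverse (of_nat (8*d) :: complex)"
    have "S $$ (a,b) * Fm d t $$ (b,a) = S $$ (a,b) * wv d t b * cnj (wv d t a) * r"
      if "a < d" "b < d" for a b
      using that unfolding r_def by (simp only: Fm_r mult.assoc)
    then have "(\<Sum>a<d. \<Sum>b<d. S $$ (a,b) * Fm d t $$ (b,a)) = (\<Sum>a<d. \<Sum>b<d. S $$ (a,b) * wv d t b * cnj (wv d t a) * r)"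
      by (intro sum.cong refl) simp
    also have "\<dots> = (\<Sum>a<d. (\<Sum>b<d. S $$ (a,b) * wv d t b) * cnj (wv d t a)) * r"
      by (simp only: sum_distrib_right)
    finally show ?thesis unfolding r_def by (simp only: divide_inverse)
  qed
  also have "\<dots> = ((S *\<^sub>v wvec d t) \<bullet>c wvec d t) / of_nat (8*d)"
    using S by (auto simp: scalar_prod_def atLeast0LessThan mult_mat_vec_sum[of _ d] wvec_def intro!: sum.cong)
  finally show ?thesis .
qed

lemma trace_Fm_nonneg:
  assumes S: "psd_mat d S"
  shows "Re (Defs.trace (S * Fm d t)) \<ge> 0"
proof -
  have SC: "S \<in> carrier_mat d d" using S unfolding psd_mat_def hermitian_mat_def by auto
  have "0 \<le> Re ((S *\<^sub>v wvec d t) \<bullet>c wvec d t)" using S unfolding psd_mat_def by (auto simp: wvec_def)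
  then show ?thesis unfolding trace_Fm[OF SC] by (simp add: Re_divide_of_nat)
qed

lemma trace_Fm_sum:
  assumes S: "S \<in> carrier_mat d d"
  shows "(\<Sum>t<d*d*4. Defs.trace (S * Fm d t)) = Defs.trace S"
proof -
  have "(\<Sum>t<d*d*4. Defs.trace (S * Fm d t)) = (\<Sum>t<d*d*4. \<Sum>a<d. \<Sum>b<d. S $$ (a,b) * Fm d t $$ (b,a))"
    by (intro sum.cong refl trace_mult_sum[OF S Fm_carrier])
  also have "\<dots> = (\<Sum>a<d. \<Sum>b<d. S $$ (a,b) * (\<Sum>t<d*d*4. Fm d t $$ (b,a)))"
    by (simp add: sum_distrib_left sum.swap[of _ "{..<d*d*4}"])
  also have "\<dots> = (\<Sum>a<d. \<Sum>b<d. S $$ (a,b) * (if b = a then 1 else 0))"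
    by (intro sum.cong refl) (simp add: Fm_sum)
  also have "\<dots> = (\<Sum>a<d. S $$ (a,a))"
    by (intro sum.cong refl) (simp add: if_distrib sum.delta cong: if_cong)
  also have "\<dots> = Defs.trace S" using S by (simp add: Defs.trace_def)
  finally show ?thesis .
qed

definition prY :: "nat \<Rightarrow> complex mat \<Rightarrow> nat \<Rightarrow> complex" where
  "prY d Y t = (\<Sum>a<d. \<Sum>b<d. Y $$ (a,b) * Fm d t $$ (b,a))"

lemma inner_delta:
  fixes Y :: "nat \<Rightarrow> complex"
  assumes "i < d" "j < d"
  shows "(\<Sum>b<d. Y b * ((if b = i then 1 else 0) + (if b = j then p else 0)) * h) = (Y i + p * Y j) * h"
proof -
  have "Y b * ((if b = i then 1 else 0) + (if b = j then p else 0)) * h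
      = (if b = i then Y b * h else 0) + (if b = j then p * Y b * h else 0)" for b
    by (auto simp: algebra_simps)
  then have "(\<Sum>b<d. Y b * ((if b = i then 1 else 0) + (if b = j then p else 0)) * h)
     = (\<Sum>b<d. (if b = i then Y b * h else 0)) + (\<Sum>b<d. (if b = j then p * Y b * h else 0))"
    by (simp only: sum.distrib)
  also have "\<dots> = (Y i + p * Y j) * h" using assms by (simp add: sum.delta algebra_simps)
  finally show ?thesis .
qed

lemma GG:
  fixes Y :: "nat \<Rightarrow> nat \<Rightarrow> complex"
  assumes "i < d" "j < d"
  shows "(\<Sum>a<d. \<Sum>b<d. Y a b * ((if b=i then 1 else 0) + (if b=j then p else 0)) * ((if a=i then 1 else 0) + (if a=j then q else 0)))
       = Y i i + p * Y i j + q * Y j i + p * q * Y j j"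
proof -
  have "(\<Sum>a<d. \<Sum>b<d. Y a b * ((if b=i then 1 else 0) + (if b=j then p else 0)) * ((if a=i then 1 else 0) + (if a=j then q else 0)))
      = (\<Sum>a<d. (Y a i + p * Y a j) * ((if a=i then 1 else 0) + (if a=j then q else 0)))"
    by (intro sum.cong refl inner_delta[OF assms])
  also have "\<dots> = (\<Sum>a<d. (\<lambda>a. Y a i + p * Y a j) a * ((if a=i then 1 else 0) + (if a=j then q else 0)) * 1)"
    by simp
  also have "\<dots> = ((Y i i + p * Y i j) + q * (Y j i + p * Y j j)) * 1"
    by (rule inner_delta[OF assms])
  finally show ?thesis by (simp add: algebra_simps)
qed

lemma ph_cnj: "c < 4 \<Longrightarrow> ph c * cnj (ph c) = 1"
  by (auto simp: ph_def)

lemma cnj_delta: "cnj ((if a = i then 1 else 0) + (if a = j then p else 0)) = (if a = i then 1 else 0) + (if a = j then cnj p else 0)"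
  by auto

lemma prY_enc:
  assumes "i < d" "j < d" "c < 4"
  shows "prY d Y (enc d i j c) = (Y$$(i,i) + ph c * Y$$(i,j) + cnj (ph c) * Y$$(j,i) + Y$$(j,j)) * complex_of_real (1 / (8 * d))"
proof -
  define r where "r = inverse (of_nat (8*d) :: complex)"
  have r: "r = complex_of_real (1 / (8 * d))" unfolding r_def by (simp add: inverse_eq_divide)
  have "prY d Y (enc d i j c) = (\<Sum>a<d. \<Sum>b<d. Y $$ (a,b) * ((if b=i then 1 else 0) + (if b=j then ph c else 0)) * ((if a=i then 1 else 0) + (if a=j then cnj (ph c) else 0))) * r"
    unfolding prY_def sum_distrib_right
    by (intro sum.cong refl) (simp only: Fm_r lessThan_iff wv_dec[OF assms(3,2)] cnj_delta r_def mult.assoc)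
  also have "\<dots> = (Y$$(i,i) + ph c * Y$$(i,j) + cnj (ph c) * Y$$(j,i) + ph c * cnj (ph c) * Y$$(j,j)) * r"
    by (subst GG[OF assms(1,2), of "\<lambda>a b. Y $$ (a,b)"]) (rule refl)
  finally show ?thesis using ph_cnj[OF assms(3)] r by simp
qed

lemma pair_lower:
  fixes A B x s :: real
  assumes "A - B = 4 * s * x" "s \<ge> 0"
  shows "\<bar>A\<bar> + \<bar>B\<bar> \<ge> 4 * s * \<bar>x\<bar>"
proof -
  have "\<bar>A - B\<bar> \<le> \<bar>A\<bar> + \<bar>B\<bar>" by (rule abs_triangle_ineq4)
  moreover have "\<bar>A - B\<bar> = 4 * s * \<bar>x\<bar>" using assms by (simp add: abs_mult)
  ultimately show ?thesis by linarith
qed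

lemma prY_lower:
  assumes Y: "\<And>a b. a < d \<Longrightarrow> b < d \<Longrightarrow> Y$$(b,a) = cnj (Y$$(a,b))" and ij: "i < d" "j < d"
  shows "(\<Sum>c<4. \<bar>Re (prY d Y (enc d i j c))\<bar>) \<ge> cmod (Y$$(i,j)) / (2 * d)"
proof -
  define y where "y = Y$$(i,j)"
  define u where "u = Y$$(i,i) + Y$$(j,j)"
  define s :: real where "s = 1 / (8 * d)"
  have s0: "s \<ge> 0" unfolding s_def by simp
  have R: "Re (prY d Y (enc d i j c)) = (Re u + 2 * Re (ph c * y)) * s" if c: "c < 4" for c
  proof -
    have "prY d Y (enc d i j c) = (u + ph c * y + cnj (ph c * y)) * complex_of_real s"
      unfolding prY_enc[OF ij c] u_def y_def s_def using Y[OF ij] by (simp add: algebra_simps)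
    then show ?thesis by simp
  qed
  have R0: "Re (prY d Y (enc d i j 0)) = (Re u + 2 * Re y) * s" by (subst R) (simp_all add: ph_def)
  have R1: "Re (prY d Y (enc d i j 1)) = (Re u - 2 * Re y) * s" by (subst R) (simp_all add: ph_def)
  have R2: "Re (prY d Y (enc d i j 2)) = (Re u - 2 * Im y) * s" by (subst R) (simp_all add: ph_def)
  have R3: "Re (prY d Y (enc d i j 3)) = (Re u + 2 * Im y) * s" by (subst R) (simp_all add: ph_def)
  have A: "\<bar>Re (prY d Y (enc d i j 0))\<bar> + \<bar>Re (prY d Y (enc d i j 1))\<bar> \<ge> 4 * s * \<bar>Re y\<bar>"
    by (rule pair_lower[OF _ s0]) (simp only: R0 R1, simp add: algebra_simps)
  have B: "\<bar>Re (prY d Y (enc d i j 3))\<bar> + \<bar>Re (prY d Y (enc d i j 2))\<bar> \<ge> 4 * s * \<bar>Im y\<bar>"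
    by (rule pair_lower[OF _ s0]) (simp only: R2 R3, simp add: algebra_simps)
  have C: "cmod y \<le> \<bar>Re y\<bar> + \<bar>Im y\<bar>" by (rule cmod_le)
  have "cmod y / (2 * d) = 4 * s * cmod y" unfolding s_def by simp
  also have "\<dots> \<le> 4 * s * (\<bar>Re y\<bar> + \<bar>Im y\<bar>)" using C s0 by (intro mult_left_mono) auto
  also have "\<dots> \<le> (\<Sum>c<4. \<bar>Re (prY d Y (enc d i j c))\<bar>)"
    unfolding sum4 using A B by (simp add: algebra_simps)
  finally show ?thesis unfolding y_def .
qed

lemma sum_prY_lower:
  assumes Y: "\<And>a b. a < d \<Longrightarrow> b < d \<Longrightarrow> Y$$(b,a) = cnj (Y$$(a,b))"
  shows "(\<Sum>t<d*d*4. \<bar>Re (prY d Y t)\<bar>) \<ge> (\<Sum>i<d. \<Sum>j<d. cmod (Y$$(i,j))) / (2 * d)"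
proof -
  have "(\<Sum>i<d. \<Sum>j<d. cmod (Y$$(i,j))) / (2 * d) = (\<Sum>i<d. \<Sum>j<d. cmod (Y$$(i,j)) / (2 * d))"
    by (simp add: sum_divide_distrib)
  also have "\<dots> \<le> (\<Sum>i<d. \<Sum>j<d. \<Sum>c<4. \<bar>Re (prY d Y (enc d i j c))\<bar>)"
    by (intro sum_mono prY_lower[OF Y]) auto
  also have "\<dots> = (\<Sum>t<d*d*4. \<bar>Re (prY d Y t)\<bar>)" by (rule sum_J[symmetric])
  finally show ?thesis .
qed

lemma half_subset:
  fixes r :: "nat \<Rightarrow> real"
  shows "\<exists>S \<subseteq> {..<J}. \<bar>\<Sum>t\<in>S. r t\<bar> \<ge> (\<Sum>t<J. \<bar>r t\<bar>) / 2"
proof -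
  define S1 where "S1 = {t\<in>{..<J}. r t \<ge> 0}"
  define S2 where "S2 = {t\<in>{..<J}. \<not> r t \<ge> 0}"
  have e1: "(\<Sum>t\<in>S1. r t) = (\<Sum>t<J. if r t \<ge> 0 then r t else 0)"
    unfolding S1_def by (rule sum.inter_filter) simp
  have e2: "(\<Sum>t\<in>S2. r t) = (\<Sum>t<J. if \<not> r t \<ge> 0 then r t else 0)"
    unfolding S2_def by (rule sum.inter_filter) simp
  have "(\<Sum>t<J. \<bar>r t\<bar>) = (\<Sum>t<J. (if r t \<ge> 0 then r t else 0) - (if \<not> r t \<ge> 0 then r t else 0))"
    by (intro sum.cong refl) auto
  also have "\<dots> = (\<Sum>t\<in>S1. r t) - (\<Sum>t\<in>S2. r t)" unfolding e1 e2 by (simp add: sum_subtractf)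
  finally have tot: "(\<Sum>t<J. \<bar>r t\<bar>) = (\<Sum>t\<in>S1. r t) - (\<Sum>t\<in>S2. r t)" .
  show ?thesis
  proof (cases "(\<Sum>t\<in>S1. r t) \<ge> - (\<Sum>t\<in>S2. r t)")
    case True
    then show ?thesis using tot by (intro exI[of _ S1]) (auto simp: S1_def)
  next
    case False
    then show ?thesis using tot by (intro exI[of _ S2]) (auto simp: S2_def)
  qed
qed

definition cf :: "nat \<Rightarrow> nat \<Rightarrow> nat \<Rightarrow> real" where
  "cf m n i = (if i < m then 1 / real m else - 1 / real n)"

definition Zs :: "nat \<Rightarrow> nat \<Rightarrow> nat set \<Rightarrow> (nat \<Rightarrow> nat) \<Rightarrow> real" where
  "Zs m n S x = (\<Sum>i<m+n. cf m n i * (if x i \<in> S then 1 else 0))"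

lemma sum_split_mn: "(\<Sum>i<m+n. (if i < m then A else B)) = real m * A + real n * (B::real)"
proof -
  have "(\<Sum>i<m+n. (if i < m then A else B)) = (\<Sum>i<m. (if i < m then A else B)) + (\<Sum>i\<in>{m..<m+n}. (if i < m then A else B))"
  proof -
    have eq: "{..<m+n} = {..<m} \<union> {m..<m+n}" by auto
    show ?thesis by (subst eq) (rule sum.union_disjoint; auto)
  qed
  also have "\<dots> = (\<Sum>i<m. A) + (\<Sum>i\<in>{m..<m+n}. B)" by (intro arg_cong2[where f="(+)"] sum.cong) auto
  also have "\<dots> = real m * A + real n * B" by simp
  finally show ?thesis .
qed

lemma hoeff:
  fixes P Q :: "nat pmf"
  assumes m: "0 < m" and n: "0 < n" and S: "finite S" and e: "0 \<le> \<epsilon>"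
  shows "measure_pmf.prob (Pi_pmf {..<m+n} undefined (\<lambda>i. if i < m then P else Q))
     {x. \<epsilon> \<le> \<bar>Zs m n S x - ((\<Sum>t\<in>S. pmf P t) - (\<Sum>t\<in>S. pmf Q t))\<bar>} \<le> 2 * exp (- (\<epsilon>^2 * real (min m n)))"
proof -
  define D where "D i = (if i < m then P else Q)" for i
  define Pi where "Pi = Pi_pmf {..<m+n} undefined D"
  define X where "X i x = cf m n i * (if x i \<in> S then 1 else 0)" for i and x :: "nat \<Rightarrow> nat"
  define a where "a i = min 0 (cf m n i)" for i
  define b where "b i = max 0 (cf m n i)" for i
  interpret ps: prob_space "measure_pmf Pi" by (rule measure_pmf.prob_space_axioms)
  have indep: "prob_space.indep_vars (measure_pmf Pi) (\<lambda>_. borel) X {..<m+n}"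
  proof -
    have "prob_space.indep_vars (measure_pmf Pi) (\<lambda>_. count_space UNIV) (\<lambda>x f. f x) {..<m+n}"
      unfolding Pi_def by (rule indep_vars_Pi_pmf) simp
    then have "prob_space.indep_vars (measure_pmf Pi) (\<lambda>_. borel) (\<lambda>i x. (\<lambda>i v. cf m n i * (if v \<in> S then 1 else 0)) i ((\<lambda>x f. f x) i x)) {..<m+n}"
      by (rule prob_space.indep_vars_compose2[OF measure_pmf.prob_space_axioms]) simp
    then show ?thesis unfolding X_def by simp
  qed
  define mu where "mu = (\<Sum>i<m+n. measure_pmf.expectation Pi (X i))"
  interpret H: Hoeffding_ineq "measure_pmf Pi" "{..<m+n}" X a b mu
  proof unfold_locales
    show "finite {..<m+n}" by simp
    show "prob_space.indep_vars (measure_pmf Pi) (\<lambda>_. borel) X {..<m+n}" by (rule indep)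
    show "AE x in measure_pmf Pi. X i x \<in> {a i..b i}" if "i \<in> {..<m+n}" for i
      by (intro AE_I2) (auto simp: X_def a_def b_def)
  qed (simp add: mu_def)
  have E: "measure_pmf.expectation Pi (X i) = cf m n i * (\<Sum>t\<in>S. pmf (D i) t)" if i: "i < m+n" for i
  proof -
    have "measure_pmf.expectation Pi (X i) = measure_pmf.expectation (map_pmf (\<lambda>f. f i) Pi) (\<lambda>v. cf m n i * (if v \<in> S then 1 else 0))"
      unfolding integral_map_pmf X_def by simp
    also have "map_pmf (\<lambda>f. f i) Pi = D i" unfolding Pi_def using i by (subst Pi_pmf_component) auto
    also have "measure_pmf.expectation (D i) (\<lambda>v. cf m n i * (if v \<in> S then 1 else 0))
        = (\<Sum>t\<in>S. (cf m n i * (if t \<in> S then 1 else 0)) * pmf (D i) t)"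
      by (rule integral_measure_pmf_real[OF S]) (auto split: if_splits)
    also have "\<dots> = cf m n i * (\<Sum>t\<in>S. pmf (D i) t)" by (simp add: sum_distrib_left)
    finally show ?thesis .
  qed
  have mu: "mu = (\<Sum>t\<in>S. pmf P t) - (\<Sum>t\<in>S. pmf Q t)"
  proof -
    have "mu = (\<Sum>i<m+n. cf m n i * (\<Sum>t\<in>S. pmf (D i) t))" unfolding mu_def by (intro sum.cong refl E) simp
    also have "\<dots> = (\<Sum>i<m+n. (if i < m then (1 / real m) * (\<Sum>t\<in>S. pmf P t) else (- 1 / real n) * (\<Sum>t\<in>S. pmf Q t)))"
      by (intro sum.cong refl) (simp add: cf_def D_def)
    also have "\<dots> = (\<Sum>t\<in>S. pmf P t) - (\<Sum>t\<in>S. pmf Q t)" using m n by (simp add: sum_split_mn)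
    finally show ?thesis .
  qed
  have sab: "(\<Sum>i\<in>{..<m+n}. (b i - a i)^2) = 1 / real m + 1 / real n"
  proof -
    have "(\<Sum>i\<in>{..<m+n}. (b i - a i)^2) = (\<Sum>i<m+n. (if i < m then (1 / real m)^2 else (1 / real n)^2))"
      by (intro sum.cong refl) (auto simp: a_def b_def cf_def)
    also have "\<dots> = 1 / real m + 1 / real n" using m n by (simp add: sum_split_mn power2_eq_square)
    finally show ?thesis .
  qed
  have pos: "(\<Sum>i\<in>{..<m+n}. (b i - a i)^2) > 0" unfolding sab using m n by (simp add: add_pos_pos)
  have "measure_pmf.prob Pi {x\<in>space (measure_pmf Pi). \<bar>(\<Sum>i\<in>{..<m+n}. X i x) - mu\<bar> \<ge> \<epsilon>} \<le> 2 * exp (-2 * \<epsilon>\<^sup>2 / (\<Sum>i\<in>{..<m+n}. (b i - a i)\<^sup>2))"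
    by (rule H.Hoeffding_ineq_abs_ge[OF e pos])
  also have "\<dots> \<le> 2 * exp (- (\<epsilon>^2 * real (min m n)))"
  proof -
    let ?k = "real (min m n)"
    have k0: "?k > 0" using m n by simp
    define h where "h = 1 / real m + 1 / real n"
    have h0: "h > 0" unfolding h_def using m n by (simp add: add_pos_pos)
    have "1 / real m \<le> 1 / ?k" "1 / real n \<le> 1 / ?k"
      using m n by (simp_all add: frac_le)
    then have "h \<le> 2 / ?k" unfolding h_def by simp
    then have hk: "h * ?k \<le> 2" using k0 by (simp add: le_divide_eq)
    have "\<epsilon>^2 * ?k * h \<le> 2 * \<epsilon>\<^sup>2" using mult_left_mono[OF hk, of "\<epsilon>^2"] by (simp add: mult_ac)
    then have "\<epsilon>^2 * ?k \<le> 2 * \<epsilon>\<^sup>2 / h" using h0 by (simp add: le_divide_eq)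
    then have "\<epsilon>^2 * ?k \<le> 2 * \<epsilon>\<^sup>2 / (1 / real m + 1 / real n)" unfolding h_def .
    then show ?thesis unfolding sab by simp
  qed
  finally have main: "measure_pmf.prob Pi {x\<in>space (measure_pmf Pi). \<bar>(\<Sum>i\<in>{..<m+n}. X i x) - mu\<bar> \<ge> \<epsilon>} \<le> 2 * exp (- (\<epsilon>^2 * real (min m n)))" .
  have "{x\<in>space (measure_pmf Pi). \<bar>(\<Sum>i\<in>{..<m+n}. X i x) - mu\<bar> \<ge> \<epsilon>}
      = {x. \<epsilon> \<le> \<bar>Zs m n S x - ((\<Sum>t\<in>S. pmf P t) - (\<Sum>t\<in>S. pmf Q t))\<bar>}"
    unfolding mu Zs_def X_def by simp
  then show ?thesis using main unfolding Pi_def D_def by simp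
qed

lemma trace_norm_nonneg: "trace_norm X \<ge> 0"
proof -
  have "\<And>M. sum_mset (image_mset (\<lambda>e. sqrt (cmod e)) M) \<ge> (0::real)"
  proof -
    fix M :: "complex multiset"
    show "sum_mset (image_mset (\<lambda>e. sqrt (cmod e)) M) \<ge> 0"
      by (induction M) auto
  qed
  then show ?thesis unfolding trace_norm_def by blast
qed

definition Fs :: "nat \<Rightarrow> complex mat list" where
  "Fs d = map (Fm d) [0..<d*d*4]"

lemma foldr_entries:
  assumes "\<forall>M\<in>set Ms. M \<in> carrier_mat d d"
  shows "foldr (+) Ms (0\<^sub>m d d) \<in> carrier_mat d d \<and>
     (\<forall>a<d. \<forall>b<d. foldr (+) Ms (0\<^sub>m d d) $$ (a,b) = (\<Sum>M\<leftarrow>Ms. M $$ (a,b)))"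
  using assms by (induction Ms) auto

lemma Fs_povm: assumes "d \<ge> 1" shows "povm d (Fs d)"
proof -
  have ne: "Fs d \<noteq> []" using assms by (simp add: Fs_def)
  have ps: "\<forall>E\<in>set (Fs d). psd_mat d E" by (auto simp: Fs_def Fm_psd)
  have car: "\<forall>M\<in>set (Fs d). M \<in> carrier_mat d d" by (auto simp: Fs_def)
  note fe = foldr_entries[OF car]
  have "foldr (+) (Fs d) (0\<^sub>m d d) = 1\<^sub>m d"
  proof (rule eq_matI)
    fix a b assume ab: "a < dim_row (1\<^sub>m d)" "b < dim_col (1\<^sub>m d)"
    then have ab': "a < d" "b < d" by auto
    have "foldr (+) (Fs d) (0\<^sub>m d d) $$ (a,b) = (\<Sum>M\<leftarrow>Fs d. M $$ (a,b))" using fe ab' by blast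
    also have "\<dots> = (\<Sum>t<d*d*4. Fm d t $$ (a,b))"
      by (simp add: Fs_def o_def interv_sum_list_conv_sum_set_nat atLeast0LessThan)
    also have "\<dots> = 1\<^sub>m d $$ (a,b)" using Fm_sum[OF ab'] ab' by simp
    finally show "foldr (+) (Fs d) (0\<^sub>m d d) $$ (a,b) = 1\<^sub>m d $$ (a,b)" .
  qed (use fe in auto)
  then show ?thesis using ne ps unfolding povm_def by blast
qed

definition pf :: "nat \<Rightarrow> complex mat \<Rightarrow> nat \<Rightarrow> real" where
  "pf d \<sigma> t = (if t < d*d*4 then Re (Defs.trace (\<sigma> * Fm d t)) else 0)"

definition Dm :: "nat \<Rightarrow> complex mat \<Rightarrow> nat pmf" where
  "Dm d \<sigma> = embed_pmf (pf d \<sigma>)"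

lemma density_carrier: "density_op d \<sigma> \<Longrightarrow> \<sigma> \<in> carrier_mat d d"
  unfolding density_op_def psd_mat_def hermitian_mat_def by auto

lemma pmf_Dm: assumes "density_op d \<sigma>" shows "pmf (Dm d \<sigma>) t = pf d \<sigma> t"
proof -
  have psd: "psd_mat d \<sigma>" and tr: "Defs.trace \<sigma> = 1" using assms unfolding density_op_def by auto
  have C: "\<sigma> \<in> carrier_mat d d" by (rule density_carrier[OF assms])
  have nn: "0 \<le> pf d \<sigma> t" for t unfolding pf_def using trace_Fm_nonneg[OF psd] by simp
  have "(\<integral>\<^sup>+ t. ennreal (pf d \<sigma> t) \<partial>count_space UNIV) = (\<Sum>t<d*d*4. ennreal (pf d \<sigma> t))"
    by (rule nn_integral_count_space') (auto simp: pf_def)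
  also have "\<dots> = ennreal (\<Sum>t<d*d*4. pf d \<sigma> t)" using nn by (simp add: sum_ennreal)
  also have "(\<Sum>t<d*d*4. pf d \<sigma> t) = Re (\<Sum>t<d*d*4. Defs.trace (\<sigma> * Fm d t))" by (simp add: pf_def)
  also have "\<dots> = 1" using trace_Fm_sum[OF C] tr by simp
  finally have "(\<integral>\<^sup>+ t. ennreal (pf d \<sigma> t) \<partial>count_space UNIV) = 1" by simp
  then show ?thesis unfolding Dm_def by (rule pmf_embed_pmf[OF nn])
qed

lemma sum_le_prob:
  fixes p :: "'a pmf"
  assumes "finite Os" "\<And>x. x \<in> Os \<Longrightarrow> 0 \<le> g x \<and> g x \<le> 1" "\<And>x. x \<in> Os \<Longrightarrow> g x \<noteq> 0 \<Longrightarrow> x \<in> B"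
  shows "(\<Sum>x\<in>Os. g x * pmf p x) \<le> measure_pmf.prob p B"
proof -
  have "(\<Sum>x\<in>Os. g x * pmf p x) \<le> (\<Sum>x\<in>Os. (if x \<in> B then pmf p x else 0))"
  proof (rule sum_mono)
    fix x assume x: "x \<in> Os"
    show "g x * pmf p x \<le> (if x \<in> B then pmf p x else 0)"
      using assms(2,3)[OF x] by (cases "g x = 0") (auto intro: mult_left_le_one_le)
  qed
  also have "\<dots> = (\<Sum>x\<in>{x\<in>Os. x \<in> B}. pmf p x)" by (rule sum.inter_filter[symmetric]) (rule assms(1))
  also have "\<dots> = measure_pmf.prob p {x\<in>Os. x \<in> B}" using assms(1) by (simp add: measure_measure_pmf_finite)
  also have "\<dots> \<le> measure_pmf.prob p B" by (rule measure_pmf.finite_measure_mono) auto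
  finally show ?thesis .
qed

definition Lc :: "nat \<Rightarrow> real \<Rightarrow> real" where
  "Lc d \<alpha> = ln (2 ^ (d*d*4+1) / \<alpha>)"

definition thr :: "nat \<Rightarrow> real \<Rightarrow> nat \<Rightarrow> nat \<Rightarrow> real" where
  "thr d \<alpha> m n = sqrt (Lc d \<alpha> / real (min m n))"

definition gdec :: "nat \<Rightarrow> real \<Rightarrow> nat \<Rightarrow> nat \<Rightarrow> (nat \<Rightarrow> nat) \<Rightarrow> real" where
  "gdec d \<alpha> m n x = (if (\<forall>S\<in>Pow {..<d*d*4}. \<bar>Zs m n S x\<bar> \<le> thr d \<alpha> m n) then 1 else 0)"

definition Mrule :: "nat \<Rightarrow> real \<Rightarrow> nat \<Rightarrow> nat \<Rightarrow> indep_rule" where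
  "Mrule d \<alpha> m n = ((\<lambda>i. Fs d), gdec d \<alpha> m n)"

lemma Lc_nonneg: assumes "0 < \<alpha>" "\<alpha> < 1" shows "Lc d \<alpha> \<ge> 0"
proof -
  have "(1::real) \<le> 2 ^ (d*d*4+1)" by (rule one_le_power) simp
  then have "1 \<le> 2 ^ (d*d*4+1) / \<alpha>" using assms by (simp add: le_divide_eq)
  then show ?thesis unfolding Lc_def by simp
qed

lemma valid_Mrule: "d \<ge> 1 \<Longrightarrow> valid_indep_rule d N (Mrule d \<alpha> m n)"
  unfolding valid_indep_rule_def Mrule_def gdec_def using Fs_povm by auto

lemma len_Fs[simp]: "length (Fs d) = d*d*4" by (simp add: Fs_def)

lemma outcome_prob_pmf:
  assumes \<sigma>: "density_op d \<sigma>" and \<rho>: "density_op d \<rho>"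
    and x: "x \<in> outcomes (m+n) (fst (Mrule d \<alpha> m n))"
  shows "outcome_prob m n (Mrule d \<alpha> m n) \<sigma> \<rho> x
     = pmf (Pi_pmf {..<m+n} undefined (\<lambda>i. if i < m then Dm d \<sigma> else Dm d \<rho>)) x"
proof -
  have xP: "x \<in> Pi\<^sub>E {..<m+n} (\<lambda>i. {..<d*d*4})" using x by (simp add: outcomes_def Mrule_def)
  have und: "\<forall>y. y \<notin> {..<m+n} \<longrightarrow> x y = undefined" using xP by (auto intro: PiE_arb)
  have "pmf (Pi_pmf {..<m+n} undefined (\<lambda>i. if i < m then Dm d \<sigma> else Dm d \<rho>)) x
      = (\<Prod>i\<in>{..<m+n}. pmf (if i < m then Dm d \<sigma> else Dm d \<rho>) (x i))"
    using und by (subst pmf_Pi) auto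
  also have "\<dots> = (\<Prod>i<m+n. Re (Defs.trace (copy_state m \<sigma> \<rho> i * (fst (Mrule d \<alpha> m n) i ! x i))))"
  proof (rule prod.cong[OF refl])
    fix i assume i: "i \<in> {..<m+n}"
    have xi: "x i < d*d*4" using xP i by (auto simp: PiE_def Pi_def)
    show "pmf (if i < m then Dm d \<sigma> else Dm d \<rho>) (x i) = Re (Defs.trace (copy_state m \<sigma> \<rho> i * (fst (Mrule d \<alpha> m n) i ! x i)))"
      using xi by (simp add: pmf_Dm[OF \<sigma>] pmf_Dm[OF \<rho>] pf_def copy_state_def Mrule_def Fs_def)
  qed
  finally show ?thesis unfolding outcome_prob_def by simp
qed

lemma finite_outcomes: "finite (outcomes N (fst (Mrule d \<alpha> m n)))"
  unfolding outcomes_def by (intro finite_PiE) auto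

lemma prob_H1_le:
  assumes \<sigma>: "density_op d \<sigma>" and \<rho>: "density_op d \<rho>"
    and B: "\<And>x. gdec d \<alpha> m n x = 0 \<Longrightarrow> x \<in> B"
  shows "prob_H1 m n (Mrule d \<alpha> m n) \<sigma> \<rho> \<le>
     measure_pmf.prob (Pi_pmf {..<m+n} undefined (\<lambda>i. if i < m then Dm d \<sigma> else Dm d \<rho>)) B"
proof -
  have "prob_H1 m n (Mrule d \<alpha> m n) \<sigma> \<rho> = (\<Sum>x\<in>outcomes (m+n) (fst (Mrule d \<alpha> m n)). (1 - gdec d \<alpha> m n x) *
     pmf (Pi_pmf {..<m+n} undefined (\<lambda>i. if i < m then Dm d \<sigma> else Dm d \<rho>)) x)"
    unfolding prob_H1_def by (intro sum.cong refl) (simp only: outcome_prob_pmf[OF \<sigma> \<rho>], simp add: Mrule_def)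
  also have "\<dots> \<le> measure_pmf.prob (Pi_pmf {..<m+n} undefined (\<lambda>i. if i < m then Dm d \<sigma> else Dm d \<rho>)) B"
  proof (rule sum_le_prob[OF finite_outcomes])
    fix x
    have g: "gdec d \<alpha> m n x = 0 \<or> gdec d \<alpha> m n x = 1" by (simp add: gdec_def)
    then show "0 \<le> 1 - gdec d \<alpha> m n x \<and> 1 - gdec d \<alpha> m n x \<le> 1" by auto
    show "1 - gdec d \<alpha> m n x \<noteq> 0 \<Longrightarrow> x \<in> B" using g B by auto
  qed
  finally show ?thesis .
qed

lemma prob_H0_le:
  assumes \<sigma>: "density_op d \<sigma>" and \<rho>: "density_op d \<rho>"
    and B: "\<And>x. gdec d \<alpha> m n x \<noteq> 0 \<Longrightarrow> x \<in> B"
  shows "prob_H0 m n (Mrule d \<alpha> m n) \<sigma> \<rho> \<le>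
     measure_pmf.prob (Pi_pmf {..<m+n} undefined (\<lambda>i. if i < m then Dm d \<sigma> else Dm d \<rho>)) B"
proof -
  have "prob_H0 m n (Mrule d \<alpha> m n) \<sigma> \<rho> = (\<Sum>x\<in>outcomes (m+n) (fst (Mrule d \<alpha> m n)). gdec d \<alpha> m n x *
     pmf (Pi_pmf {..<m+n} undefined (\<lambda>i. if i < m then Dm d \<sigma> else Dm d \<rho>)) x)"
    unfolding prob_H0_def by (intro sum.cong refl) (simp only: outcome_prob_pmf[OF \<sigma> \<rho>], simp add: Mrule_def)
  also have "\<dots> \<le> measure_pmf.prob (Pi_pmf {..<m+n} undefined (\<lambda>i. if i < m then Dm d \<sigma> else Dm d \<rho>)) B"
    by (rule sum_le_prob[OF finite_outcomes]) (auto simp: gdec_def intro: B)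
  finally show ?thesis .
qed

lemma typeI:
  assumes d: "d \<ge> 1" and a0: "0 < \<alpha>" and a1: "\<alpha> < 1" and \<rho>: "density_op d \<rho>" and m: "0 < m" and n: "0 < n"
  shows "prob_H1 m n (Mrule d \<alpha> m n) \<rho> \<rho> \<le> \<alpha>"
proof -
  define J where "J = d*d*4"
  define PP where "PP = Pi_pmf {..<m+n} undefined (\<lambda>i. if i < m then Dm d \<rho> else Dm d \<rho>)"
  define E where "E S = {x. thr d \<alpha> m n \<le> \<bar>Zs m n S x - ((\<Sum>t\<in>S. pmf (Dm d \<rho>) t) - (\<Sum>t\<in>S. pmf (Dm d \<rho>) t))\<bar>}" for S
  define k where "k = real (min m n)"
  have k0: "k > 0" unfolding k_def using m n by simp
  have L0: "Lc d \<alpha> \<ge> 0" by (rule Lc_nonneg[OF a0 a1])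
  have thr0: "thr d \<alpha> m n \<ge> 0" unfolding thr_def using L0 by simp
  have "prob_H1 m n (Mrule d \<alpha> m n) \<rho> \<rho> \<le> measure_pmf.prob PP (\<Union>S\<in>Pow {..<J}. E S)"
  proof -
    have "x \<in> (\<Union>S\<in>Pow {..<J}. E S)" if "gdec d \<alpha> m n x = 0" for x
    proof -
      from that obtain S where S: "S \<in> Pow {..<J}" "\<not> \<bar>Zs m n S x\<bar> \<le> thr d \<alpha> m n"
        unfolding gdec_def J_def by (auto split: if_splits)
      then have "x \<in> E S" unfolding E_def by simp
      then show ?thesis using S(1) by blast
    qed
    then show ?thesis unfolding PP_def by (rule prob_H1_le[OF \<rho> \<rho>])
  qed
  also have "\<dots> \<le> (\<Sum>S\<in>Pow {..<J}. measure_pmf.prob PP (E S))"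
    by (rule measure_pmf.finite_measure_subadditive_finite) auto
  also have "\<dots> \<le> (\<Sum>S\<in>Pow {..<J}. 2 * exp (- ((thr d \<alpha> m n)^2 * real (min m n))))"
  proof (rule sum_mono)
    fix S assume S: "S \<in> Pow {..<J}"
    then have fS: "finite S" by (auto intro: finite_subset)
    show "measure_pmf.prob PP (E S) \<le> 2 * exp (- ((thr d \<alpha> m n)^2 * real (min m n)))"
      unfolding PP_def E_def by (rule hoeff[OF m n fS thr0])
  qed
  also have "\<dots> = 2 ^ J * (2 * exp (- Lc d \<alpha>))"
  proof -
    have "(thr d \<alpha> m n)^2 * real (min m n) = Lc d \<alpha>"
      unfolding thr_def using L0 k0 unfolding k_def by simp
    then show ?thesis by (simp add: card_Pow)
  qed
  also have "exp (- Lc d \<alpha>) = \<alpha> / 2 ^ (J+1)"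
    unfolding Lc_def J_def using a0 by (simp add: exp_minus)
  also have "2 ^ J * (2 * (\<alpha> / 2 ^ (J+1))) = \<alpha>" by simp
  finally show ?thesis .
qed

lemma sq_sum_le:
  fixes c :: "nat \<Rightarrow> nat \<Rightarrow> real"
  assumes nn: "\<And>a b. 0 \<le> c a b"
  shows "(\<Sum>a<d. \<Sum>b<d. (c a b)^2) \<le> (\<Sum>a<d. \<Sum>b<d. c a b)^2"
proof -
  let ?L = "\<Sum>a<d. \<Sum>b<d. c a b"
  have le: "c a b \<le> ?L" if "a < d" "b < d" for a b
  proof -
    have "c a b \<le> (\<Sum>b<d. c a b)" by (rule member_le_sum) (use that nn in auto)
    also have "\<dots> \<le> ?L" by (rule member_le_sum[of a "{..<d}" "\<lambda>a. \<Sum>b<d. c a b"]) (use that nn in \<open>auto intro: sum_nonneg\<close>)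
    finally show ?thesis .
  qed
  have "(\<Sum>a<d. \<Sum>b<d. (c a b)^2) \<le> (\<Sum>a<d. \<Sum>b<d. c a b * ?L)"
    by (intro sum_mono) (use le nn in \<open>auto simp: power2_eq_square intro: mult_left_mono\<close>)
  also have "\<dots> = ?L * ?L" by (simp add: sum_distrib_right)
  finally show ?thesis by (simp add: power2_eq_square)
qed

lemma herm_entry:
  assumes "density_op d \<sigma>" "a < d" "b < d"
  shows "\<sigma> $$ (b,a) = cnj (\<sigma> $$ (a,b))"
proof -
  have C: "\<sigma> \<in> carrier_mat d d" and h: "mat_adjoint \<sigma> = \<sigma>"
    using assms(1) unfolding density_op_def psd_mat_def hermitian_mat_def by auto
  have "mat_adjoint \<sigma> $$ (b,a) = cnj (\<sigma> $$ (a,b))" by (rule mat_adjoint_index[OF C assms(3,2)])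
  then show ?thesis using h by simp
qed

lemma typeII:
  assumes d: "d \<ge> 1" and a0: "0 < \<alpha>" and a1: "\<alpha> < 1"
    and \<sigma>: "density_op d \<sigma>" and \<rho>: "density_op d \<rho>" and ne: "\<rho> \<noteq> \<sigma>"
  shows "\<exists>K::real. \<exists>N1. \<forall>m n. N1 \<le> m \<longrightarrow> N1 \<le> n \<longrightarrow>
     prob_H0 m n (Mrule d \<alpha> m n) \<sigma> \<rho> \<le>
       exp (- real (min m n) * (trace_norm (\<rho> - \<sigma>))\<^sup>2 / (344 * real d ^ 3) + K * sqrt (real (min m n)))"
proof -
  have \<sigma>C: "\<sigma> \<in> carrier_mat d d" by (rule density_carrier[OF \<sigma>])
  have \<rho>C: "\<rho> \<in> carrier_mat d d" by (rule density_carrier[OF \<rho>])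
  have dims: "dim_row \<sigma> = d" "dim_col \<sigma> = d" "dim_row \<rho> = d" "dim_col \<rho> = d"
    using carrier_matD[OF \<sigma>C] carrier_matD[OF \<rho>C] by auto
  define Y where "Y = \<sigma> - \<rho>"
  have Yij: "Y $$ (i,j) = \<sigma> $$ (i,j) - \<rho> $$ (i,j)" if "i < d" "j < d" for i j
    unfolding Y_def using that dims by (intro index_minus_mat) auto
  have Yh: "Y $$ (b,a) = cnj (Y $$ (a,b))" if "a < d" "b < d" for a b
    using Yij[OF that] Yij[OF that(2,1)] herm_entry[OF \<sigma> that] herm_entry[OF \<rho> that] by simp
  define L where "L = (\<Sum>i<d. \<Sum>j<d. cmod (Y$$(i,j)))"
  have Lnn: "L \<ge> 0" unfolding L_def by (intro sum_nonneg) auto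
  have Lpos: "L > 0"
  proof (rule ccontr)
    assume "\<not> L > 0"
    then have "L = 0" using Lnn by simp
    then have "\<forall>i\<in>{..<d}. (\<Sum>j<d. cmod (Y$$(i,j))) = 0" unfolding L_def
      by (subst sum_nonneg_eq_0_iff[symmetric]) (auto intro: sum_nonneg)
    then have "\<forall>i\<in>{..<d}. \<forall>j\<in>{..<d}. cmod (Y$$(i,j)) = 0"
      by (auto simp: sum_nonneg_eq_0_iff)
    then have "\<sigma> = \<rho>"
      by (intro eq_matI) (use dims Yij in auto)
    then show False using ne by simp
  qed
  define r where "r t = Re (prY d Y t)" for t
  have rt: "r t = pmf (Dm d \<sigma>) t - pmf (Dm d \<rho>) t" if t: "t < d*d*4" for t
  proof -
    have "prY d Y t = (\<Sum>a<d. \<Sum>b<d. \<sigma> $$ (a,b) * Fm d t $$ (b,a)) - (\<Sum>a<d. \<Sum>b<d. \<rho> $$ (a,b) * Fm d t $$ (b,a))"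
      unfolding prY_def by (simp add: Yij left_diff_distrib sum_subtractf)
    also have "\<dots> = Defs.trace (\<sigma> * Fm d t) - Defs.trace (\<rho> * Fm d t)"
      using trace_mult_sum[OF \<sigma>C Fm_carrier] trace_mult_sum[OF \<rho>C Fm_carrier] by simp
    finally show ?thesis unfolding r_def using t by (simp add: pmf_Dm[OF \<sigma>] pmf_Dm[OF \<rho>] pf_def)
  qed
  have low: "(\<Sum>t<d*d*4. \<bar>r t\<bar>) \<ge> L / (2 * d)"
    unfolding r_def L_def by (rule sum_prY_lower) (rule Yh)
  obtain S where S: "S \<subseteq> {..<d*d*4}" and Sh: "\<bar>\<Sum>t\<in>S. r t\<bar> \<ge> (\<Sum>t<d*d*4. \<bar>r t\<bar>) / 2"
    using half_subset by blast
  have fS: "finite S" using S by (auto intro: finite_subset)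
  define \<Delta> where "\<Delta> = L / (4 * d)"
  have \<Delta>0: "\<Delta> > 0" unfolding \<Delta>_def using Lpos d by simp
  define \<mu> where "\<mu> = (\<Sum>t\<in>S. pmf (Dm d \<sigma>) t) - (\<Sum>t\<in>S. pmf (Dm d \<rho>) t)"
  have \<mu>: "\<bar>\<mu>\<bar> \<ge> \<Delta>"
  proof -
    have "\<mu> = (\<Sum>t\<in>S. r t)" unfolding \<mu>_def sum_subtractf[symmetric]
      by (intro sum.cong refl) (use S rt in auto)
    moreover have "L / (4 * d) = (L / (2 * d)) / 2" by simp
    ultimately show ?thesis using Sh low unfolding \<Delta>_def by linarith
  qed
  have Lc0: "Lc d \<alpha> \<ge> 0" by (rule Lc_nonneg[OF a0 a1])
  define K where "K = ln 2 + 2 * \<Delta> * sqrt (Lc d \<alpha>)"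
  define N1 where "N1 = nat \<lceil>Lc d \<alpha> / \<Delta>^2\<rceil> + 1"
    define tn where "tn = trace_norm (\<rho> - \<sigma>)"
  have tnb: "tn^2 / (344 * real d ^ 3) \<le> \<Delta>^2"
  proof -
    have C: "\<rho> - \<sigma> \<in> carrier_mat d d" by (rule minus_carrier_mat[OF \<sigma>C])
    define F where "F = (\<Sum>a<d. \<Sum>b<d. (cmod ((\<rho> - \<sigma>)$$(a,b)))^2)"
    have tn1: "tn \<le> sqrt (real d * F)" unfolding tn_def F_def by (rule trace_norm_bound[OF C])
    have tn0: "tn \<ge> 0" unfolding tn_def by (rule trace_norm_nonneg)
    have F0: "F \<ge> 0" unfolding F_def by (intro sum_nonneg) auto
    have "F = (\<Sum>a<d. \<Sum>b<d. (cmod (Y$$(a,b)))^2)"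
      unfolding F_def using dims by (intro sum.cong refl) (simp add: Yij norm_minus_commute)
    also have "\<dots> \<le> L^2" unfolding L_def by (rule sq_sum_le) simp
    finally have FL: "F \<le> L^2" .
    have "tn^2 \<le> (sqrt (real d * F))^2" using tn0 tn1 by (intro power_mono) auto
    also have "\<dots> = real d * F" using F0 by simp
    also have "\<dots> \<le> real d * L^2" using FL by (intro mult_left_mono) auto
    finally have "tn^2 \<le> real d * L^2" .
    then have "tn^2 / (344 * real d ^ 3) \<le> real d * L^2 / (344 * real d ^ 3)"
      using d by (intro divide_right_mono) auto
    also have "\<dots> = L^2 / (344 * (real d)^2)" using d by (simp add: power2_eq_square power3_eq_cube)
    also have "\<dots> \<le> L^2 / (16 * (real d)^2)" using d by (intro divide_left_mono) auto
    also have "\<dots> = \<Delta>^2" unfolding \<Delta>_def by (simp add: power2_eq_square)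
    finally show ?thesis .
  qed
  show ?thesis
  proof (intro exI allI impI)
    fix m n assume mN: "N1 \<le> m" and nN: "N1 \<le> n"
    have m: "0 < m" and n: "0 < n" using mN nN unfolding N1_def by auto
    define k where "k = real (min m n)"
    have k0: "k > 0" unfolding k_def using m n by simp
    have "Lc d \<alpha> / \<Delta>^2 \<le> real (nat \<lceil>Lc d \<alpha> / \<Delta>^2\<rceil>)" by linarith
    also have "\<dots> < real N1" unfolding N1_def by simp
    also have "\<dots> \<le> k" unfolding k_def using mN nN by simp
    finally have "Lc d \<alpha> / \<Delta>^2 < k" .
    then have "Lc d \<alpha> < k * \<Delta>^2" using \<Delta>0 by (simp add: divide_less_eq mult.commute)
    then have "Lc d \<alpha> / k < \<Delta>^2" using k0 by (simp add: divide_less_eq mult.commute)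
    then have "thr d \<alpha> m n < \<Delta>"
      unfolding thr_def k_def[symmetric] using \<Delta>0 by (metis real_sqrt_less_iff real_sqrt_abs abs_of_pos power2_eq_square real_sqrt_mult_self)
    then have e0: "0 \<le> \<Delta> - thr d \<alpha> m n" by simp
    define B where "B = {x. \<Delta> - thr d \<alpha> m n \<le> \<bar>Zs m n S x - \<mu>\<bar>}"
    have "prob_H0 m n (Mrule d \<alpha> m n) \<sigma> \<rho> \<le>
       measure_pmf.prob (Pi_pmf {..<m+n} undefined (\<lambda>i. if i < m then Dm d \<sigma> else Dm d \<rho>)) B"
    proof (rule prob_H0_le[OF \<sigma> \<rho>])
      fix x assume "gdec d \<alpha> m n x \<noteq> 0"
      then have "\<forall>S\<in>Pow {..<d*d*4}. \<bar>Zs m n S x\<bar> \<le> thr d \<alpha> m n" unfolding gdec_def by (auto split: if_splits)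
      then have "\<bar>Zs m n S x\<bar> \<le> thr d \<alpha> m n" using S by auto
      then show "x \<in> B" unfolding B_def using \<mu> by auto
    qed
    also have "\<dots> \<le> 2 * exp (- ((\<Delta> - thr d \<alpha> m n)^2 * real (min m n)))"
      unfolding B_def \<mu>_def by (rule hoeff[OF m n fS e0])
    also have "\<dots> \<le> exp (- real (min m n) * (trace_norm (\<rho> - \<sigma>))\<^sup>2 / (344 * real d ^ 3) + K * sqrt (real (min m n)))"
    proof -
      define th where "th = thr d \<alpha> m n"
      have th0: "th \<ge> 0" unfolding th_def thr_def using Lc0 k0 by simp
      have sk: "sqrt k \<ge> 1" using k0 unfolding k_def using m n by simp
      have thk: "th * k = sqrt (Lc d \<alpha>) * sqrt k"
      proof -
        have "th = sqrt (Lc d \<alpha>) / sqrt k" unfolding th_def thr_def k_def by (simp add: real_sqrt_divide)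
        moreover have "k = sqrt k * sqrt k" using k0 by simp
        ultimately show ?thesis using k0 by (metis nonzero_mult_div_cancel_right real_sqrt_gt_0_iff less_irrefl times_divide_eq_left mult.assoc)
      qed
      have "(\<Delta> - th)^2 * k \<ge> \<Delta>^2 * k - 2 * \<Delta> * (th * k)"
      proof -
        have "(\<Delta> - th)^2 * k = \<Delta>^2 * k - 2 * \<Delta> * (th * k) + th^2 * k" by (simp add: power2_eq_square algebra_simps)
        moreover have "th^2 * k \<ge> 0" using k0 by simp
        ultimately show ?thesis by linarith
      qed
      then have e1: "- ((\<Delta> - th)^2 * k) \<le> - (\<Delta>^2 * k) + 2 * \<Delta> * sqrt (Lc d \<alpha>) * sqrt k"
        unfolding thk by (simp add: mult_ac)
      have e2': "k * tn^2 / (344 * real d ^ 3) \<le> k * \<Delta>^2"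
        using tnb k0 by (simp add: mult_left_mono times_divide_eq_right[symmetric] del: times_divide_eq_right)
      then have e2: "k * tn^2 / (344 * real d ^ 3) \<le> \<Delta>^2 * k" by (simp add: mult.commute)
      have e3: "ln 2 * 1 \<le> ln 2 * sqrt k" using sk by (intro mult_left_mono) auto
      have eK: "K * sqrt k = ln 2 * sqrt k + 2 * \<Delta> * sqrt (Lc d \<alpha>) * sqrt k"
        unfolding K_def by (simp add: algebra_simps)
      have "ln 2 + - ((\<Delta> - th)^2 * k) \<le> - (k * tn^2 / (344 * real d ^ 3)) + K * sqrt k"
        using e1 e2 e3 eK by linarith
      then have X: "exp (ln 2 + - ((\<Delta> - th)^2 * k)) \<le> exp (- (k * tn^2 / (344 * real d ^ 3)) + K * sqrt k)"
        by (simp only: exp_le_cancel_iff)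
      have Y: "exp (ln 2 + - ((\<Delta> - th)^2 * k)) = 2 * exp (- ((\<Delta> - th)^2 * k))"
        by (simp only: exp_add exp_ln_iff) simp
      have fin: "2 * exp (- ((\<Delta> - th)^2 * k)) \<le> exp (- (k * tn^2 / (344 * real d ^ 3)) + K * sqrt k)"
        using X by (simp only: Y)
      have eqB: "- (k * tn^2 / (344 * real d ^ 3)) = - real (min m n) * (trace_norm (\<rho> - \<sigma>))\<^sup>2 / (344 * real d ^ 3)"
        unfolding k_def tn_def by simp
      have fin2: "2 * exp (- ((\<Delta> - th)^2 * k)) \<le> exp (- real (min m n) * (trace_norm (\<rho> - \<sigma>))\<^sup>2 / (344 * real d ^ 3) + K * sqrt k)"
        using fin by (simp only: eqB)
      show ?thesis using fin2 unfolding th_def k_def .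
    qed
    finally show "prob_H0 m n (Mrule d \<alpha> m n) \<sigma> \<rho> \<le>
       exp (- real (min m n) * (trace_norm (\<rho> - \<sigma>))\<^sup>2 / (344 * real d ^ 3) + K * sqrt (real (min m n)))" .
  qed
qed

theorem theorem5:
  fixes d :: nat and \<alpha> :: real
  assumes "d \<ge> 1" and "0 < \<alpha>" and "\<alpha> < 1"
  shows "\<exists>M :: nat \<Rightarrow> nat \<Rightarrow> indep_rule.
     (\<forall>m n. valid_indep_rule d (m+n) (M m n)) \<and>
     (\<forall>C::real. C \<ge> 1 \<longrightarrow>
        (\<exists>N0. \<forall>m n. N0 \<le> m \<longrightarrow> N0 \<le> n \<longrightarrow> real m \<le> C * real n \<longrightarrow> real n \<le> C * real m \<longrightarrow>
            (\<forall>\<rho>. density_op d \<rho> \<longrightarrow> prob_H1 m n (M m n) \<rho> \<rho> \<le> \<alpha>)) \<and>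
        (\<forall>\<rho> \<sigma>. density_op d \<rho> \<longrightarrow> density_op d \<sigma> \<longrightarrow> \<rho> \<noteq> \<sigma> \<longrightarrow>
           (\<exists>K::real. \<exists>N1. \<forall>m n. N1 \<le> m \<longrightarrow> N1 \<le> n \<longrightarrow>
              real m \<le> C * real n \<longrightarrow> real n \<le> C * real m \<longrightarrow>
              prob_H0 m n (M m n) \<sigma> \<rho> \<le>
                exp (- real (min m n) * (trace_norm (\<rho> - \<sigma>))\<^sup>2 / (344 * real d ^ 3)
                     + K * sqrt (real (min m n))))))"
proof -
  have d: "d \<ge> 1" and a0: "0 < \<alpha>" and a1: "\<alpha> < 1" using assms by auto
  show ?thesis
  proof (intro exI[of _ "Mrule d \<alpha>"] conjI allI impI)
    fix m n show "valid_indep_rule d (m+n) (Mrule d \<alpha> m n)" by (rule valid_Mrule[OF d])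
  next
    fix C :: real assume "C \<ge> 1"
    show "\<exists>N0. \<forall>m n. N0 \<le> m \<longrightarrow> N0 \<le> n \<longrightarrow> real m \<le> C * real n \<longrightarrow> real n \<le> C * real m \<longrightarrow>
            (\<forall>\<rho>. density_op d \<rho> \<longrightarrow> prob_H1 m n (Mrule d \<alpha> m n) \<rho> \<rho> \<le> \<alpha>)"
    proof (intro exI[of _ 1] allI impI)
      fix m n :: nat and \<rho> assume "1 \<le> m" "1 \<le> n" "density_op d \<rho>"
      then show "prob_H1 m n (Mrule d \<alpha> m n) \<rho> \<rho> \<le> \<alpha>" using typeI[OF d a0 a1] by auto
    qed
  next
    fix C :: real and \<rho> \<sigma> assume "density_op d \<rho>" "density_op d \<sigma>" "\<rho> \<noteq> \<sigma>"
    from typeII[OF d a0 a1 this(2,1,3)] obtain K N1 where KN: "\<forall>m n. N1 \<le> m \<longrightarrow> N1 \<le> n \<longrightarrow>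
     prob_H0 m n (Mrule d \<alpha> m n) \<sigma> \<rho> \<le>
       exp (- real (min m n) * (trace_norm (\<rho> - \<sigma>))\<^sup>2 / (344 * real d ^ 3) + K * sqrt (real (min m n)))"
      by blast
    show "\<exists>K::real. \<exists>N1. \<forall>m n. N1 \<le> m \<longrightarrow> N1 \<le> n \<longrightarrow>
              real m \<le> C * real n \<longrightarrow> real n \<le> C * real m \<longrightarrow>
              prob_H0 m n (Mrule d \<alpha> m n) \<sigma> \<rho> \<le>
                exp (- real (min m n) * (trace_norm (\<rho> - \<sigma>))\<^sup>2 / (344 * real d ^ 3)
                     + K * sqrt (real (min m n)))"
      using KN by blast
  qed
qed

end
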